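(* Let $N\ge2$, $\zeta(t)=\max\{t,t^N\}$ for $t\ge0$, $\Phi_1(t)=\exp(|t|^{N/(N-1)})-\sum_{j=0}^{N-2}\frac{|t|^{Nj/(N-1)}}{j!}$, and let $\tilde\Phi_1(s)=\sup_{t\ge0}\{st-\Phi_1(t)\}$ ($s\ge0$) be its conjugate function. Then (i) $\tilde\Phi_1\big(\Phi_1(r)/r\big)\le\Phi_1(r)$ for all $r>0$; (ii) $\tilde\Phi_1(tr)\le\zeta(t)\tilde\Phi_1(r)$ for all $t,r\ge0$. Consequently $\tilde\Phi_1$ satisfies the $\Delta_2$-condition and $E_{\tilde\Phi_1}(\mathbb{R}^N)=L^{\tilde\Phi_1}(\mathbb{R}^N)$.
   Context: An $N$-function is a continuous, convex, even $\Theta:\mathbb{R}\to[0,\infty)$ with $\Theta(t)=0$ iff $t=0$, $\Theta(t)/t\to0$ as $t\to0$ and $\Theta(t)/t\to\infty$ as $t\to\infty$. $\Theta$ satisfies the $\Delta_2$-condition if $\Theta(2t)\le C\Theta(t)$ for all $t\ge0$ and some $C>0$. The Orlicz space $L^\Theta(\mathbb{R}^N)=\{u\in L^1_{loc}(\mathbb{R}^N):\int\Theta(|u|/\lambda)dx<\infty\text{ for some }\lambda>0\}$ carries the Luxemburg norm $\|u\|_\Theta=\inf\{\lambda>0:\int\Theta(|u|/\lambda)dx\le1\}$, and $E_\Theta(\mathbb{R}^N)$ is the closure in $L^\Theta(\mathbb{R}^N)$ of the functions with bounded support. *)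

theory Defs
  imports "HOL-Analysis.Analysis"
begin

definition zeta :: "nat \<Rightarrow> real \<Rightarrow> real" where
  "zeta N t = max t (t ^ N)"

text \<open>The power |t|^(Nj/(N-1)) is written as (|t|^(N/(N-1)))^j so that the j = 0 term is 1
  also at t = 0 (in Isabelle, 0 powr 0 = 0).\<close>
definition Phi1 :: "nat \<Rightarrow> real \<Rightarrow> real" where
  "Phi1 N t = exp (\<bar>t\<bar> powr (real N / (real N - 1)))
      - (\<Sum>j = 0..N - 2. (\<bar>t\<bar> powr (real N / (real N - 1))) ^ j / fact j)"

definition Phi1_conj :: "nat \<Rightarrow> real \<Rightarrow> real" where
  "Phi1_conj N s = (SUP t\<in>{0..}. s * t - Phi1 N t)"

definition Delta2 :: "(real \<Rightarrow> real) \<Rightarrow> bool" where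
  "Delta2 \<Theta> \<longleftrightarrow> (\<exists>C>0. \<forall>t\<ge>0. \<Theta> (2 * t) \<le> C * \<Theta> t)"

definition loc_integrable :: "('a::euclidean_space \<Rightarrow> real) \<Rightarrow> bool" where
  "loc_integrable u \<longleftrightarrow> u \<in> borel_measurable lebesgue \<and>
     (\<forall>K. compact K \<longrightarrow> set_integrable lebesgue K u)"

definition orlicz_modular :: "(real \<Rightarrow> real) \<Rightarrow> ('a::euclidean_space \<Rightarrow> real) \<Rightarrow> real \<Rightarrow> ennreal" where
  "orlicz_modular \<Theta> u c = (\<integral>\<^sup>+ x. ennreal (\<Theta> (\<bar>u x\<bar> / c)) \<partial>lebesgue)"

definition orlicz_L :: "(real \<Rightarrow> real) \<Rightarrow> ('a::euclidean_space \<Rightarrow> real) set" where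
  "orlicz_L \<Theta> = {u. loc_integrable u \<and> (\<exists>c>0. orlicz_modular \<Theta> u c < \<infinity>)}"

definition luxemburg :: "(real \<Rightarrow> real) \<Rightarrow> ('a::euclidean_space \<Rightarrow> real) \<Rightarrow> real" where
  "luxemburg \<Theta> u = Inf {c. c > 0 \<and> orlicz_modular \<Theta> u c \<le> 1}"

definition orlicz_E :: "(real \<Rightarrow> real) \<Rightarrow> ('a::euclidean_space \<Rightarrow> real) set" where
  "orlicz_E \<Theta> = {u \<in> orlicz_L \<Theta>. \<forall>\<epsilon>>0. \<exists>v\<in>orlicz_L \<Theta>.
       bounded {x. v x \<noteq> 0} \<and> luxemburg \<Theta> (\<lambda>x. u x - v x) < \<epsilon>}"

end

theory Submission
  imports Defs
begin

definition G :: "nat \<Rightarrow> real \<Rightarrow> real" where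
  "G M x = (\<Sum>n. x^(n+M)/fact(n+M))"

lemma summable_exp_div: "summable (\<lambda>n. (x::real)^n / fact n)"
  using summable_exp[of x] by (simp add: field_simps)

lemma summable_G: "summable (\<lambda>n. (x::real)^(n+M)/fact(n+M))"
  using summable_exp_div[of x] summable_iff_shift[of "\<lambda>n. x^n/fact n" M] by simp

lemma exp_split: "exp (x::real) = G M x + (\<Sum>j<M. x^j/fact j)"
proof -
  have "exp x = (\<Sum>n. x^n / fact n)"
    by (simp add: exp_def field_simps scaleR_conv_of_real)
  also have "\<dots> = G M x + (\<Sum>j<M. x^j/fact j)"
    unfolding G_def by (rule suminf_split_initial_segment[OF summable_exp_div])
  finally show ?thesis .
qed

lemma G_lower: assumes "x \<ge> 0" shows "x^M / fact M \<le> G M x"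
proof -
  have "sum (\<lambda>n. x^(n+M)/fact(n+M)) {0} \<le> G M x"
    unfolding G_def by (rule sum_le_suminf[OF summable_G]) (use assms in auto)
  thus ?thesis by simp
qed

lemma G_nonneg: assumes "x \<ge> 0" shows "0 \<le> G M x"
  using G_lower[OF assms, of M] assms by (meson order_trans zero_le_divide_iff zero_le_power fact_ge_zero)

lemma G_scale: assumes "x \<ge> 0" "m \<ge> 1" shows "m^M * G M x \<le> G M (m*x)"
proof -
  have "m^M * G M x = (\<Sum>n. m^M * (x^(n+M)/fact(n+M)))"
    unfolding G_def by (rule suminf_mult[OF summable_G, symmetric])
  also have "\<dots> \<le> G M (m*x)"
    unfolding G_def
  proof (rule suminf_le)
    show "summable (\<lambda>n. m^M * (x^(n+M)/fact(n+M)))" by (rule summable_mult[OF summable_G])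
    show "summable (\<lambda>n. (m*x)^(n+M)/fact(n+M))" by (rule summable_G)
    fix n
    have "m^M \<le> m^(n+M)" using assms by (simp add: power_increasing)
    hence "m^M * x^(n+M) \<le> m^(n+M) * x^(n+M)"
      using assms by (simp add: mult_right_mono)
    thus "m^M * (x^(n+M)/fact(n+M)) \<le> (m*x)^(n+M)/fact(n+M)"
      by (simp add: power_mult_distrib divide_right_mono)
  qed
  finally show ?thesis .
qed

lemma powr_pow_N: assumes "N \<ge> 2" "(t::real) \<ge> 0"
  shows "(t powr (real N / (real N - 1)))^(N-1) = t^N"
proof (cases "t = 0")
  case True thus ?thesis using assms by (simp add: power_0_left)
next
  case False
  hence tp: "t > 0" using assms by simp
  have r: "real (N-1) = real N - 1" using assms by simp
  have "(t powr (real N / (real N - 1)))^(N-1) = t powr (real N / (real N - 1) * real (N-1))"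
    using tp by (simp add: powr_realpow[symmetric] powr_powr)
  also have "real N / (real N - 1) * real (N-1) = real N" using assms r by simp
  finally show ?thesis using tp by (simp add: powr_realpow)
qed

lemma Phi1_G: assumes "N \<ge> 2"
  shows "Phi1 N t = G (N-1) (\<bar>t\<bar> powr (real N / (real N - 1)))"
proof -
  have "{0..N-2} = {..<N-1}" using assms by auto
  thus ?thesis unfolding Phi1_def using exp_split[of _ "N-1"] by simp
qed

lemma Phi1_nonneg: assumes "N \<ge> 2" shows "0 \<le> Phi1 N t"
  using Phi1_G[OF assms] G_nonneg by simp

lemma Phi1_zero: assumes "N \<ge> 2" shows "Phi1 N 0 = 0"
proof -
  have "\<And>n. (0::real) ^ (n + (N - 1)) / fact (n + (N - 1)) = 0" using assms by simp
  hence "(\<lambda>n. (0::real) ^ (n + (N - 1)) / fact (n + (N - 1))) = (\<lambda>n. 0)" by (rule ext)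
  thus ?thesis unfolding Phi1_G[OF assms] G_def by simp
qed

lemma Phi1_lower: assumes "N \<ge> 2" "t \<ge> 0" shows "t^N / fact (N-1) \<le> Phi1 N t"
  using G_lower[of "t powr (real N / (real N - 1))" "N-1"] Phi1_G[OF assms(1), of t]
    powr_pow_N[OF assms] assms(2) by simp

lemma Phi1_scale: assumes "N \<ge> 2" "lm \<ge> 1" "s \<ge> 0"
  shows "lm^N * Phi1 N s \<le> Phi1 N (lm * s)"
proof -
  let ?a = "real N / (real N - 1)"
  have "\<bar>lm * s\<bar> powr ?a = (lm powr ?a) * (s powr ?a)" using assms by (simp add: powr_mult)
  moreover have "lm powr ?a \<ge> 1" using assms by (simp add: ge_one_powr_ge_zero)
  ultimately have "(lm powr ?a)^(N-1) * G (N-1) (s powr ?a) \<le> G (N-1) (\<bar>lm * s\<bar> powr ?a)"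
    using G_scale[of "s powr ?a" "lm powr ?a" "N-1"] by simp
  thus ?thesis using Phi1_G[OF assms(1)] powr_pow_N[OF assms(1), of lm] assms by simp
qed

lemma conj_bdd: assumes "N \<ge> 2"
  shows "bdd_above ((\<lambda>\<tau>. s * \<tau> - Phi1 N \<tau>) ` {0..})"
proof -
  define K where "K = max 1 (\<bar>s\<bar> * fact (N-1))"
  have "s * \<tau> - Phi1 N \<tau> \<le> \<bar>s\<bar> * K" if "\<tau> \<ge> 0" for \<tau>
  proof (cases "\<tau> \<le> K")
    case True
    have "s * \<tau> \<le> \<bar>s\<bar> * K" using True that
      by (metis abs_ge_self abs_ge_zero mult_mono order_trans abs_mult abs_of_nonneg)
    thus ?thesis using Phi1_nonneg[OF assms, of \<tau>] by linarith
  next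
    case False
    hence t1: "\<tau> \<ge> 1" "\<tau> \<ge> \<bar>s\<bar> * fact (N-1)" unfolding K_def by auto
    have "\<tau>^2 \<le> \<tau>^N" using t1 assms by (simp add: power_increasing)
    have "\<bar>s\<bar> * fact (N-1) * \<tau> \<le> \<tau> * \<tau>" using t1 by (simp add: mult_right_mono)
    hence "\<bar>s\<bar> * \<tau> \<le> \<tau>^N / fact (N-1)" using \<open>\<tau>^2 \<le> \<tau>^N\<close>
      by (simp add: field_simps power2_eq_square)
    also have "\<dots> \<le> Phi1 N \<tau>" by (rule Phi1_lower[OF assms that])
    finally have "s * \<tau> \<le> Phi1 N \<tau>"
      by (metis abs_ge_self abs_mult abs_of_nonneg order_trans that mult_right_mono)
    moreover have "0 \<le> \<bar>s\<bar> * K" unfolding K_def by simp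
    ultimately show ?thesis by linarith
  qed
  thus ?thesis by (auto intro!: bdd_aboveI2)
qed

lemma conj_ge: assumes "N \<ge> 2" "\<tau> \<ge> 0"
  shows "s * \<tau> - Phi1 N \<tau> \<le> Phi1_conj N s"
  unfolding Phi1_conj_def by (rule cSUP_upper[OF _ conj_bdd[OF assms(1)]]) (use assms in auto)

lemma conj_le: assumes "\<And>\<tau>. \<tau> \<ge> 0 \<Longrightarrow> s * \<tau> - Phi1 N \<tau> \<le> B"
  shows "Phi1_conj N s \<le> B"
  unfolding Phi1_conj_def by (rule cSUP_least) (use assms in auto)

lemma conj_nonneg: assumes "N \<ge> 2" shows "0 \<le> Phi1_conj N s"
  using conj_ge[OF assms, of 0 s] Phi1_zero[OF assms] by simp

lemma conj_zero: assumes "N \<ge> 2" shows "Phi1_conj N 0 = 0"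
  using conj_le[of 0 N 0] Phi1_nonneg[OF assms] conj_nonneg[OF assms, of 0] by force

lemma conj_mono: assumes "N \<ge> 2" shows "mono (Phi1_conj N)"
proof (rule monoI)
  fix a b :: real assume "a \<le> b"
  show "Phi1_conj N a \<le> Phi1_conj N b"
  proof (rule conj_le)
    fix \<tau> :: real assume "\<tau> \<ge> 0"
    hence "a * \<tau> \<le> b * \<tau>" using \<open>a \<le> b\<close> by (simp add: mult_right_mono)
    thus "a * \<tau> - Phi1 N \<tau> \<le> Phi1_conj N b" using conj_ge[OF assms \<open>\<tau> \<ge> 0\<close>, of b] by linarith
  qed
qed

lemma part1: assumes "N \<ge> 2" "r > 0"
  shows "Phi1_conj N (Phi1 N r / r) \<le> Phi1 N r"
proof (rule conj_le)
  fix \<tau> :: real assume t: "\<tau> \<ge> 0"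
  show "Phi1 N r / r * \<tau> - Phi1 N \<tau> \<le> Phi1 N r"
  proof (cases "\<tau> \<le> r")
    case True
    have "Phi1 N r / r * \<tau> \<le> Phi1 N r / r * r"
      using True Phi1_nonneg[OF assms(1), of r] assms by (intro mult_left_mono) auto
    moreover have "Phi1 N r / r * r = Phi1 N r" using assms by simp
    ultimately show ?thesis using Phi1_nonneg[OF assms(1), of \<tau>] by linarith
  next
    case False
    define lm where "lm = \<tau> / r"
    have lm1: "lm \<ge> 1" using False assms unfolding lm_def by simp
    have "lm \<le> lm^N" using lm1 assms by (metis power_one_right power_increasing le_trans one_le_numeral) 
    hence "lm * Phi1 N r \<le> lm^N * Phi1 N r" using Phi1_nonneg[OF assms(1), of r] by (simp add: mult_right_mono)
    also have "\<dots> \<le> Phi1 N (lm * r)" by (rule Phi1_scale[OF assms(1) lm1]) (use assms in simp)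
    also have "lm * r = \<tau>" unfolding lm_def using assms by simp
    finally have "Phi1 N r / r * \<tau> \<le> Phi1 N \<tau>" unfolding lm_def by (simp add: field_simps)
    thus ?thesis using Phi1_nonneg[OF assms(1), of r] by linarith
  qed
qed

lemma part2: assumes "N \<ge> 2" "t \<ge> 0" "r \<ge> 0"
  shows "Phi1_conj N (t * r) \<le> zeta N t * Phi1_conj N r"
proof (cases "t \<le> 1")
  case True
  have "Phi1_conj N (t * r) \<le> t * Phi1_conj N r"
  proof (rule conj_le)
    fix \<tau> :: real assume tau: "\<tau> \<ge> 0"
    have "t * Phi1 N \<tau> \<le> Phi1 N \<tau>" using True Phi1_nonneg[OF assms(1), of \<tau>]
      by (simp add: mult_left_le_one_le assms)
    moreover have "t * (r * \<tau> - Phi1 N \<tau>) \<le> t * Phi1_conj N r"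
      using conj_ge[OF assms(1) tau, of r] assms by (simp add: mult_left_mono)
    ultimately show "t * r * \<tau> - Phi1 N \<tau> \<le> t * Phi1_conj N r" by (simp add: algebra_simps)
  qed
  also have "\<dots> \<le> zeta N t * Phi1_conj N r"
    unfolding zeta_def using conj_nonneg[OF assms(1), of r] by (simp add: mult_right_mono)
  finally show ?thesis .
next
  case False
  hence t1: "t \<ge> 1" by simp
  have "Phi1_conj N (t * r) \<le> t^N * Phi1_conj N r"
  proof (rule conj_le)
    fix \<tau> :: real assume tau: "\<tau> \<ge> 0"
    define \<sigma> where "\<sigma> = \<tau> / t"
    have s0: "\<sigma> \<ge> 0" and ts: "\<tau> = t * \<sigma>" unfolding \<sigma>_def using tau t1 by auto
    have "t^2 \<le> t^N" using t1 assms by (simp add: power_increasing)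
    hence "t^2 * (r * \<sigma>) \<le> t^N * (r * \<sigma>)" using s0 assms by (simp add: mult_right_mono)
    moreover have "t^N * Phi1 N \<sigma> \<le> Phi1 N \<tau>" using Phi1_scale[OF assms(1) t1 s0] ts by simp
    moreover have "t^N * (r * \<sigma> - Phi1 N \<sigma>) \<le> t^N * Phi1_conj N r"
      using conj_ge[OF assms(1) s0, of r] t1 by (simp add: mult_left_mono)
    moreover have "t * r * \<tau> = t^2 * (r * \<sigma>)" using ts by (simp add: power2_eq_square)
    moreover have "t^N * (r * \<sigma> - Phi1 N \<sigma>) = t^N * (r * \<sigma>) - t^N * Phi1 N \<sigma>"
      by (simp add: right_diff_distrib)
    ultimately show "t * r * \<tau> - Phi1 N \<tau> \<le> t^N * Phi1_conj N r" by linarith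
  qed
  also have "\<dots> \<le> zeta N t * Phi1_conj N r"
    unfolding zeta_def using conj_nonneg[OF assms(1), of r] by (simp add: mult_right_mono)
  finally show ?thesis .
qed

lemma part3: assumes "N \<ge> 2" shows "Delta2 (Phi1_conj N)"
  unfolding Delta2_def
proof (intro exI[of _ "2^N"] conjI allI impI)
  fix t :: real assume "t \<ge> 0"
  have "zeta N 2 = 2^N" unfolding zeta_def using assms
    by (metis max.absorb2 power_one_right power_increasing one_le_numeral le_trans)
  thus "Phi1_conj N (2 * t) \<le> 2^N * Phi1_conj N t" using part2[OF assms _ \<open>t \<ge> 0\<close>, of 2] by simp
qed simp

lemma tail_small:
  fixes f :: "'a::euclidean_space \<Rightarrow> ennreal"
  assumes [measurable]: "f \<in> borel_measurable lebesgue" and fin: "(\<integral>\<^sup>+ x. f x \<partial>lebesgue) < \<infinity>"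
  shows "\<exists>R::real. (\<integral>\<^sup>+ x. f x * indicator (- cball 0 R) x \<partial>lebesgue) < 1"
proof -
  define g where "g i x = f x * indicator (- cball (0::'a) (real i)) x" for i x
  have [measurable]: "cball (0::'a) r \<in> sets lebesgue" for r
    using lmeasurable_cball fmeasurableD by blast
  have gm: "g i \<in> borel_measurable lebesgue" for i unfolding g_def by measurable
  have dec: "AE x in lebesgue. g (Suc i) x \<le> g i x" for i
  proof (rule AE_I2)
    fix x
    have "indicator (- cball (0::'a) (real (Suc i))) x \<le> (indicator (- cball 0 (real i)) x :: ennreal)"
      by (auto simp: indicator_def)
    thus "g (Suc i) x \<le> g i x" unfolding g_def by (simp add: mult_left_mono)
  qed
  have "integral\<^sup>N lebesgue (g 0) \<le> integral\<^sup>N lebesgue f"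
    unfolding g_def by (intro nn_integral_mono) (auto simp: indicator_def)
  hence g0: "integral\<^sup>N lebesgue (g 0) < \<infinity>" using fin by (meson le_less_trans)
  have pw: "(INF i. g i x) = 0" for x
  proof -
    obtain i :: nat where "norm x \<le> real i" using real_arch_simple by blast
    hence "g i x = 0" unfolding g_def by (simp add: dist_norm)
    hence "(INF i. g i x) \<le> 0" by (metis INF_lower2 UNIV_I order_refl)
    thus ?thesis by simp
  qed
  have "(INF i. integral\<^sup>N lebesgue (g i)) = (\<integral>\<^sup>+ x. (INF i. g i x) \<partial>lebesgue)"
    by (rule nn_integral_monotone_convergence_INF_AE'[OF dec gm g0, symmetric])
  also have "\<dots> = 0" by (simp add: pw)
  finally have "(INF i. integral\<^sup>N lebesgue (g i)) < 1" by simp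
  then obtain i where "integral\<^sup>N lebesgue (g i) < 1" by (auto simp: INF_less_iff)
  thus ?thesis unfolding g_def by blast
qed

lemma E_eq_L:
  fixes \<Theta> :: "real \<Rightarrow> real" and Z :: "real \<Rightarrow> real"
  assumes mo: "mono \<Theta>" and nn: "\<And>s. 0 \<le> \<Theta> s" and z: "\<Theta> 0 = 0"
    and Zn: "\<And>t. t \<ge> 0 \<Longrightarrow> Z t \<ge> 0"
    and sc: "\<And>t r. t \<ge> 0 \<Longrightarrow> r \<ge> 0 \<Longrightarrow> \<Theta> (t * r) \<le> Z t * \<Theta> r"
  shows "orlicz_E \<Theta> = (orlicz_L \<Theta> :: ('a::euclidean_space \<Rightarrow> real) set)"
proof
  show "orlicz_E \<Theta> \<subseteq> orlicz_L \<Theta>" unfolding orlicz_E_def by blast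
next
  have [measurable]: "\<Theta> \<in> borel_measurable borel" by (rule borel_measurable_mono[OF mo])
  have [measurable]: "cball (0::'a) r \<in> sets lebesgue" for r
    using lmeasurable_cball fmeasurableD by blast
  show "orlicz_L \<Theta> \<subseteq> (orlicz_E \<Theta> :: ('a \<Rightarrow> real) set)"
  proof
    fix u :: "'a \<Rightarrow> real" assume uL: "u \<in> orlicz_L \<Theta>"
    hence li: "loc_integrable u" and "\<exists>c>0. orlicz_modular \<Theta> u c < \<infinity>" unfolding orlicz_L_def by auto
    then obtain c where c0: "c > 0" and cfin: "orlicz_modular \<Theta> u c < \<infinity>" by blast
    have [measurable]: "u \<in> borel_measurable lebesgue" using li unfolding loc_integrable_def by blast
    show "u \<in> orlicz_E \<Theta>" unfolding orlicz_E_def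
    proof (intro CollectI conjI uL allI impI)
      fix \<epsilon> :: real assume e0: "\<epsilon> > 0"
      define \<delta> where "\<delta> = \<epsilon> / 2"
      have d0: "\<delta> > 0" and de: "\<delta> < \<epsilon>" unfolding \<delta>_def using e0 by auto
      define f where "f x = ennreal (\<Theta> (\<bar>u x\<bar> / \<delta>))" for x
      have fm[measurable]: "f \<in> borel_measurable lebesgue" unfolding f_def by measurable
      have "\<Theta> (\<bar>u x\<bar> / \<delta>) \<le> Z (c / \<delta>) * \<Theta> (\<bar>u x\<bar> / c)" for x
      proof -
        have "\<bar>u x\<bar> / \<delta> = (c / \<delta>) * (\<bar>u x\<bar> / c)" using c0 d0 by simp
        thus ?thesis using sc[of "c / \<delta>" "\<bar>u x\<bar> / c"] c0 d0 by simp
      qed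
      hence "f x \<le> ennreal (Z (c / \<delta>)) * ennreal (\<Theta> (\<bar>u x\<bar> / c))" for x
        unfolding f_def using Zn[of "c / \<delta>"] c0 d0 nn by (simp add: ennreal_mult[symmetric] ennreal_leI)
      hence "integral\<^sup>N lebesgue f \<le> (\<integral>\<^sup>+ x. ennreal (Z (c / \<delta>)) * ennreal (\<Theta> (\<bar>u x\<bar> / c)) \<partial>lebesgue)"
        by (intro nn_integral_mono) auto
      also have "\<dots> = ennreal (Z (c / \<delta>)) * orlicz_modular \<Theta> u c"
        unfolding orlicz_modular_def by (rule nn_integral_cmult) measurable
      also have "\<dots> < \<infinity>" using cfin by (simp add: ennreal_mult_less_top)
      finally have ffin: "integral\<^sup>N lebesgue f < \<infinity>" .
      obtain R where R: "(\<integral>\<^sup>+ x. f x * indicator (- cball 0 R) x \<partial>lebesgue) < 1"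
        using tail_small[OF fm ffin] by blast
      define v where "v x = indicator (cball 0 R) x * u x" for x
      have [measurable]: "v \<in> borel_measurable lebesgue" unfolding v_def by measurable
      have vli: "loc_integrable v" unfolding loc_integrable_def
      proof (intro conjI allI impI)
        show "v \<in> borel_measurable lebesgue" by measurable
        fix K :: "'a set" assume "compact K"
        hence "compact (K \<inter> cball 0 R)" by (simp add: compact_Int_closed)
        hence "set_integrable lebesgue (K \<inter> cball 0 R) u" using li unfolding loc_integrable_def by blast
        moreover have "(\<lambda>x. indicator K x *\<^sub>R v x) = (\<lambda>x. indicator (K \<inter> cball 0 R) x *\<^sub>R u x)"
          unfolding v_def by (auto simp: indicator_def)
        ultimately show "set_integrable lebesgue K v" unfolding set_integrable_def by simp
      qed
      have "orlicz_modular \<Theta> v c \<le> orlicz_modular \<Theta> u c"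
        unfolding orlicz_modular_def
      proof (intro nn_integral_mono ennreal_leI)
        fix x
        have "\<bar>v x\<bar> / c \<le> \<bar>u x\<bar> / c" unfolding v_def using c0
          by (auto simp: indicator_def divide_right_mono)
        thus "\<Theta> (\<bar>v x\<bar> / c) \<le> \<Theta> (\<bar>u x\<bar> / c)" using mo by (simp add: monoD)
      qed
      hence "orlicz_modular \<Theta> v c < \<infinity>" using cfin by (meson le_less_trans)
      hence vL: "v \<in> orlicz_L \<Theta>" unfolding orlicz_L_def using vli c0 by blast
      have vb: "bounded {x. v x \<noteq> 0}"
        by (rule bounded_subset[OF bounded_cball[of 0 R]]) (auto simp: v_def indicator_def)
      have "orlicz_modular \<Theta> (\<lambda>x. u x - v x) \<delta> = (\<integral>\<^sup>+ x. f x * indicator (- cball 0 R) x \<partial>lebesgue)"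
        unfolding orlicz_modular_def f_def v_def
        by (intro nn_integral_cong) (auto simp: indicator_def z)
      hence "orlicz_modular \<Theta> (\<lambda>x. u x - v x) \<delta> \<le> 1" using R by simp
      hence "luxemburg \<Theta> (\<lambda>x. u x - v x) \<le> \<delta>" unfolding luxemburg_def
        using d0 by (intro cInf_lower) (auto intro: bdd_belowI[of _ 0])
      hence "luxemburg \<Theta> (\<lambda>x. u x - v x) < \<epsilon>" using de by simp
      thus "\<exists>v\<in>orlicz_L \<Theta>. bounded {x. v x \<noteq> 0} \<and> luxemburg \<Theta> (\<lambda>x. u x - v x) < \<epsilon>"
        using vL vb by blast
    qed
  qed
qed

theorem lemma2p5:
  fixes N :: nat
  assumes "N \<ge> 2" and "CARD('n::finite) = N"
  shows "(\<forall>r>0. Phi1_conj N (Phi1 N r / r) \<le> Phi1 N r)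
       \<and> (\<forall>t\<ge>0. \<forall>r\<ge>0. Phi1_conj N (t * r) \<le> zeta N t * Phi1_conj N r)
       \<and> Delta2 (Phi1_conj N)
       \<and> orlicz_E (Phi1_conj N) = (orlicz_L (Phi1_conj N) :: (real^'n \<Rightarrow> real) set)"
proof (intro conjI allI impI)
  show "Delta2 (Phi1_conj N)" by (rule part3[OF assms(1)])
  show "orlicz_E (Phi1_conj N) = (orlicz_L (Phi1_conj N) :: (real^'n \<Rightarrow> real) set)"
  proof (rule E_eq_L[where Z = "zeta N"])
    show "mono (Phi1_conj N)" by (rule conj_mono[OF assms(1)])
    show "\<And>s. 0 \<le> Phi1_conj N s" by (rule conj_nonneg[OF assms(1)])
    show "Phi1_conj N 0 = 0" by (rule conj_zero[OF assms(1)])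
    show "\<And>t. t \<ge> 0 \<Longrightarrow> zeta N t \<ge> 0" unfolding zeta_def by simp
    show "\<And>t r. t \<ge> 0 \<Longrightarrow> r \<ge> 0 \<Longrightarrow> Phi1_conj N (t * r) \<le> zeta N t * Phi1_conj N r"
      by (rule part2[OF assms(1)])
  qed
qed (use part1[OF assms(1)] part2[OF assms(1)] in auto)

end
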